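(* Let $1\le p\le N$ and let $\Omega=\bm\omega^1\wedge\dots\wedge\bm\omega^p$ be a simple $p$-form. Then each of $\vec\omega^1,\dots,\vec\omega^p$ is an eigenvector of its superenergy tensor $T_{ab}\{\Omega_{[p]}\}$, all with the same eigenvalue $\frac{(-1)^{p-1}(\Omega\cdot\Omega)}{2\,p!}$, i.e. $\omega^i_aT_b{}^a\{\Omega_{[p]}\}=\frac{(-1)^{p-1}(\Omega\cdot\Omega)}{2\,p!}\omega^i_b$ for $i=1,\dots,p$.
   Context: Lorentzian metric $g_{ab}$ of signature $(+,-,\dots,-)$ in dimension $N$; $\Omega\cdot\Omega$ is full contraction; simple $p$-form: wedge product of $p$ linearly independent 1-forms $\bm\omega^i$, with $\vec\omega^i$ the corresponding vectors. Superenergy tensor: $T_{ab}\{\Omega_{[p]}\}=\frac{(-1)^{p-1}}{(p-1)!}[\Omega_{a a_2\dots a_p}\Omega_b{}^{a_2\dots a_p}-\frac{1}{2p}(\Omega\cdot\Omega)g_{ab}]$ (equal to $\frac12 f^2 g_{ab}$ if $\Omega=f\eta$ is an $N$-form). *)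

theory Defs
  imports "HOL-Analysis.Analysis" "HOL-Combinatorics.Permutations"
begin

text \<open>Abstract index set: a finite type 'n, with N = CARD('n).
  Tensors are given by components in a fixed basis. The metric g is a real
  matrix g$a$b (lower indices); its inverse (upper indices) is matrix_inv g.\<close>

definition lorentzian :: "real^'n^'n \<Rightarrow> bool" where
  "lorentzian g \<longleftrightarrow> transpose g = g \<and>
     (\<exists>E :: real^'n^'n. \<exists>i0. invertible E \<and>
        (\<forall>i j. (transpose E ** g ** E) $ i $ j =
                (if i = j then (if i = i0 then 1 else -1) else 0)))"

definition tuples :: "nat \<Rightarrow> 'n list set" where
  "tuples k = {xs. length xs = k}"

definition wedge :: "nat \<Rightarrow> (nat \<Rightarrow> real^'n) \<Rightarrow> 'n list \<Rightarrow> real" where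
  "wedge p w xs = (\<Sum>s\<in>{s. s permutes {..<p}}. of_int (sign s) * (\<Prod>k<p. w k $ (xs ! s k)))"

definition fullcontr :: "real^'n^'n \<Rightarrow> nat \<Rightarrow> ('n list \<Rightarrow> real) \<Rightarrow> ('n list \<Rightarrow> real) \<Rightarrow> real" where
  "fullcontr gi p A B = (\<Sum>xs\<in>tuples p. \<Sum>ys\<in>tuples p.
      A xs * B ys * (\<Prod>k<p. gi $ (xs ! k) $ (ys ! k)))"

definition superenergy :: "real^'n^'n \<Rightarrow> nat \<Rightarrow> ('n list \<Rightarrow> real) \<Rightarrow> 'n \<Rightarrow> 'n \<Rightarrow> real" where
  "superenergy g p \<Omega> a b =
     (-1) ^ (p - 1) / fact (p - 1) *
     ((\<Sum>xs\<in>tuples (p - 1). \<Sum>ys\<in>tuples (p - 1).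
          \<Omega> (a # xs) * \<Omega> (b # ys) * (\<Prod>k<p - 1. matrix_inv g $ (xs ! k) $ (ys ! k)))
      - 1 / (2 * real p) * fullcontr (matrix_inv g) p \<Omega> \<Omega> * g $ a $ b)"

end

theory Submission
  imports Defs Jordan_Normal_Form.Determinant
begin

definition dett :: "nat \<Rightarrow> (nat \<Rightarrow> nat \<Rightarrow> real) \<Rightarrow> real" where
  "dett n M = (\<Sum>t\<in>{t. t permutes {..<n}}. of_int (sign t) * (\<Prod>j<n. M j (t j)))"

lemma dett_jnf: "dett n M = Determinant.det (Matrix.mat n n (\<lambda>(i,j). M i j))"
proof -
  have "Determinant.det (Matrix.mat n n (\<lambda>(i,j). M i j)) =
    (\<Sum>t\<in>{t. t permutes {0..<n}}. of_int (sign t) * (\<Prod>j=0..<n. (Matrix.mat n n (\<lambda>(i,j). M i j)) $$ (j, t j)))"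
    by (rule det_def') simp
  also have "\<dots> = dett n M" unfolding dett_def atLeast0LessThan
    apply (rule sum.cong[OF refl])
    apply (rule arg_cong[where f="\<lambda>x. _ * x"])
    apply (rule prod.cong[OF refl])
    proof -
      fix t j assume "t \<in> {t. t permutes {..<n}}" "j \<in> {..<n}"
      then have "t j < n" "j < n" using permutes_in_image[of t "{..<n}" j] by auto
      then show "Matrix.mat n n (\<lambda>(i, j). M i j) $$ (j, t j) = M j (t j)" by simp
    qed
  finally show ?thesis by simp
qed

lemma dett_perm_rows:
  assumes "s permutes {..<n}"
  shows "dett n (\<lambda>j. M (s j)) = of_int (sign s) * dett n M"
proof -
  have s: "s permutes {0..<n}" using assms by (simp add: atLeast0LessThan)
  have "Matrix.mat n n (\<lambda>(i,j). M (s i) j) = Matrix.mat n n (\<lambda>(i,j). (Matrix.mat n n (\<lambda>(i,j). M i j)) $$ (s i, j))"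
  proof (rule eq_matI)
    fix i j assume "i < dim_row (Matrix.mat n n (\<lambda>(i,j). (Matrix.mat n n (\<lambda>(i,j). M i j)) $$ (s i, j)))"
       "j < dim_col (Matrix.mat n n (\<lambda>(i,j). (Matrix.mat n n (\<lambda>(i,j). M i j)) $$ (s i, j)))"
    then have "i < n" "j < n" "s i < n" using permutes_in_image[OF assms, of i] by auto
    then show "Matrix.mat n n (\<lambda>(i,j). M (s i) j) $$ (i, j) = Matrix.mat n n (\<lambda>(i,j). (Matrix.mat n n (\<lambda>(i,j). M i j)) $$ (s i, j)) $$ (i, j)" by simp
  qed auto
  then show ?thesis unfolding dett_jnf
    using det_permute_rows[OF _ s, of "Matrix.mat n n (\<lambda>(i,j). M i j)"] by simp
qed

lemma dett_rows_eq:
  assumes "i \<noteq> j" "i < n" "j < n" "M i = M j"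
  shows "dett n M = 0"
  unfolding dett_jnf
  by (rule det_identical_rows[of _ n i j]) (use assms in \<open>auto simp: Matrix.row_def\<close>)

lemma tuples_finite: "finite (tuples n :: 'n::finite list set)"
proof -
  have "tuples n = {xs::'n list. set xs \<subseteq> UNIV \<and> length xs = n}" by (auto simp: tuples_def)
  then show ?thesis using finite_lists_length_eq[of "UNIV::'n set" n] by simp
qed

lemma sum_tuples_Suc:
  "(\<Sum>xs\<in>tuples (Suc n). F xs) = (\<Sum>x\<in>(UNIV::'n::finite set). \<Sum>ys\<in>tuples n. F (x#ys))"
proof -
  have e: "tuples (Suc n) = (\<lambda>(x,ys). x#ys) ` (UNIV \<times> (tuples n :: 'n list set))"
    by (auto simp: tuples_def length_Suc_conv image_iff)
  have i: "inj_on (\<lambda>(x,ys). x#ys) (UNIV \<times> (tuples n :: 'n list set))"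
    by (auto simp: inj_on_def)
  show ?thesis unfolding e sum.reindex[OF i] sum.cartesian_product by (simp add: case_prod_beta)
qed

lemma sum_swap3:
  "(\<Sum>y\<in>A. \<Sum>z\<in>B. \<Sum>u\<in>C. f y z u) = (\<Sum>u\<in>C. \<Sum>y\<in>A. \<Sum>z\<in>B. f y z u)"
proof -
  have "(\<Sum>y\<in>A. \<Sum>z\<in>B. \<Sum>u\<in>C. f y z u) = (\<Sum>y\<in>A. \<Sum>u\<in>C. \<Sum>z\<in>B. f y z u)"
    by (rule sum.cong[OF refl], rule sum.swap)
  also have "\<dots> = (\<Sum>u\<in>C. \<Sum>y\<in>A. \<Sum>z\<in>B. f y z u)" by (rule sum.swap)
  finally show ?thesis .
qed

lemma sum_tuples_prod2:
  fixes h :: "nat \<Rightarrow> 'n::finite \<Rightarrow> 'n \<Rightarrow> real"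
  shows "(\<Sum>ys\<in>tuples n. \<Sum>zs\<in>tuples n. \<Prod>k<n. h k (ys!k) (zs!k))
       = (\<Prod>k<n. \<Sum>y\<in>UNIV. \<Sum>z\<in>UNIV. h k y z)"
proof (induction n arbitrary: h)
  case 0
  have e: "tuples 0 = {[]}" by (auto simp: tuples_def)
  show ?case unfolding e by simp
next
  case (Suc n)
  let ?T = "tuples n :: 'n list set"
  have "(\<Sum>ys\<in>tuples (Suc n). \<Sum>zs\<in>tuples (Suc n). \<Prod>k<Suc n. h k (ys!k) (zs!k))
     = (\<Sum>x\<in>UNIV. \<Sum>ys\<in>?T. \<Sum>z\<in>UNIV. \<Sum>zs\<in>?T. h 0 x z * (\<Prod>k<n. h (Suc k) (ys!k) (zs!k)))"
    unfolding sum_tuples_Suc prod.lessThan_Suc_shift by simp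
  also have "\<dots> = (\<Sum>x\<in>UNIV. \<Sum>z\<in>UNIV. h 0 x z * (\<Sum>ys\<in>?T. \<Sum>zs\<in>?T. \<Prod>k<n. h (Suc k) (ys!k) (zs!k)))"
    apply (rule sum.cong[OF refl])
    apply (rule trans[OF sum.swap])
    apply (simp add: sum_distrib_left)
    done
  also have "\<dots> = (\<Sum>x\<in>UNIV. \<Sum>z\<in>UNIV. h 0 x z) * (\<Prod>k<n. \<Sum>y\<in>UNIV. \<Sum>z\<in>UNIV. h (Suc k) y z)"
    by (simp add: Suc.IH[of "\<lambda>k. h (Suc k)"] sum_distrib_right)
  also have "\<dots> = (\<Prod>k<Suc n. \<Sum>y\<in>UNIV. \<Sum>z\<in>UNIV. h k y z)"
    unfolding prod.lessThan_Suc_shift by simp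
  finally show ?case .
qed

definition Bf :: "real^'n^'n \<Rightarrow> real^'n \<Rightarrow> real^'n \<Rightarrow> real" where
  "Bf gi u v = (\<Sum>a\<in>UNIV. \<Sum>c\<in>UNIV. u $ a * gi $ a $ c * v $ c)"

lemma pair_contr:
  "(\<Sum>ys\<in>tuples n. \<Sum>zs\<in>tuples n. (\<Prod>j<n. u j $ (ys!j)) * (\<Prod>j<n. v j $ (zs!j)) * (\<Prod>k<n. gi $ (ys!k) $ (zs!k)))
   = (\<Prod>k<n. Bf gi (u k) (v k))"
  using sum_tuples_prod2[of "\<lambda>k y z. u k $ y * v k $ z * gi $ y $ z" n]
  by (simp add: prod.distrib Bf_def mult_ac)

lemma wedge_alt:
  "wedge p w xs = (\<Sum>s\<in>{s. s permutes {..<p}}. of_int (sign s) * (\<Prod>j<p. w (s j) $ (xs!j)))"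
  unfolding wedge_def
  apply (subst sum_permutations_inverse)
  apply (rule sum.cong[OF refl])
proof -
  fix s assume "s \<in> {s. s permutes {..<p}}"
  then have s: "s permutes {..<p}" by simp
  have "sign (Hilbert_Choice.inv s) = sign s"
    using s by (metis sign_inverse permutation_permutes finite_lessThan)
  moreover have "(\<Prod>k<p. w k $ (xs ! Hilbert_Choice.inv s k)) = (\<Prod>j<p. w (s j) $ (xs!j))"
    using prod.permute[OF s, of "\<lambda>k. w k $ (xs ! Hilbert_Choice.inv s k)"]
    by (simp add: permutes_inverses[OF s] o_def)
  ultimately show "of_int (sign (Hilbert_Choice.inv s)) * (\<Prod>k<p. w k $ (xs ! Hilbert_Choice.inv s k)) =
         of_int (sign s) * (\<Prod>j<p. w (s j) $ (xs ! j))" by simp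
qed

lemma wedge_cons:
  "wedge (Suc m) w (b#ys) = (\<Sum>s\<in>{s. s permutes {..<Suc m}}. of_int (sign s) * (w (s 0) $ b * (\<Prod>j<m. w (s (Suc j)) $ (ys!j))))"
  unfolding wedge_alt prod.lessThan_Suc_shift by simp


lemma sum_swap_in:
  "(\<Sum>x\<in>A. \<Sum>y\<in>B. \<Sum>z\<in>C. f x y z) = (\<Sum>y\<in>B. \<Sum>z\<in>C. \<Sum>x\<in>A. f x y z)"
proof -
  have "(\<Sum>x\<in>A. \<Sum>y\<in>B. \<Sum>z\<in>C. f x y z) = (\<Sum>y\<in>B. \<Sum>x\<in>A. \<Sum>z\<in>C. f x y z)"
    by (rule sum.swap)
  also have "\<dots> = (\<Sum>y\<in>B. \<Sum>z\<in>C. \<Sum>x\<in>A. f x y z)"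
    by (rule sum.cong[OF refl], rule sum.swap)
  finally show ?thesis .
qed

lemma sum_swap4:
  "(\<Sum>x\<in>A. \<Sum>y\<in>B. \<Sum>s\<in>S. \<Sum>t\<in>T. f x y s t) = (\<Sum>s\<in>S. \<Sum>t\<in>T. \<Sum>x\<in>A. \<Sum>y\<in>B. f x y s t)"
proof -
  have "(\<Sum>x\<in>A. \<Sum>y\<in>B. \<Sum>s\<in>S. \<Sum>t\<in>T. f x y s t) = (\<Sum>x\<in>A. \<Sum>s\<in>S. \<Sum>t\<in>T. \<Sum>y\<in>B. f x y s t)"
    by (rule sum.cong[OF refl], rule sum_swap_in)
  also have "\<dots> = (\<Sum>s\<in>S. \<Sum>t\<in>T. \<Sum>x\<in>A. \<Sum>y\<in>B. f x y s t)"
    by (rule sum_swap_in)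
  finally show ?thesis .
qed

lemma double_expand:
  "(\<Sum>ys\<in>Y. \<Sum>zs\<in>Z. (\<Sum>s\<in>S. a s * f s ys) * (\<Sum>t\<in>T. b t * h t zs) * c ys zs)
   = (\<Sum>s\<in>S. \<Sum>t\<in>T. a s * b t * (\<Sum>ys\<in>Y. \<Sum>zs\<in>Z. f s ys * h t zs * c ys zs))"
  for a b :: "_ \<Rightarrow> real"
proof -
  have e: "(\<Sum>s\<in>S. a s * f s ys) * (\<Sum>t\<in>T. b t * h t zs) * c ys zs
     = (\<Sum>s\<in>S. \<Sum>t\<in>T. a s * b t * (f s ys * h t zs * c ys zs))" for ys zs
    unfolding sum_product unfolding sum_distrib_right
    by (intro sum.cong refl) (simp only: mult_ac)
  show ?thesis unfolding e by (subst sum_swap4) (unfold sum_distrib_left, rule refl)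
qed

lemma contr_expand:
  "(\<Sum>a\<in>A. \<Sum>c\<in>C. x a * y a c * (\<Sum>s\<in>S. \<Sum>t\<in>T. F s t * z t c))
   = (\<Sum>s\<in>S. \<Sum>t\<in>T. F s t * (\<Sum>a\<in>A. \<Sum>c\<in>C. x a * y a c * z t c))"
  for F :: "_ \<Rightarrow> _ \<Rightarrow> real"
proof -
  have e: "x a * y a c * (\<Sum>s\<in>S. \<Sum>t\<in>T. F s t * z t c) = (\<Sum>s\<in>S. \<Sum>t\<in>T. F s t * (x a * y a c * z t c))" for a c
    unfolding sum_distrib_left
    by (intro sum.cong refl) (simp only: mult_ac)
  show ?thesis unfolding e by (subst sum_swap4) (unfold sum_distrib_left, rule refl)
qed

lemma card_perm_fix:
  assumes "i < Suc m"
  shows "card {s. s permutes {..<Suc m} \<and> s 0 = i} = fact m"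
proof -
  let ?S = "{..<Suc m}"
  have A0: "{s. s permutes ?S \<and> s 0 = 0} = {s. s permutes ?S - {0}}"
    unfolding permutes_def by auto
  have c0: "card {s. s permutes ?S \<and> s 0 = 0} = fact m"
    unfolding A0 by (rule card_permutations) auto
  let ?phi = "\<lambda>s. Transposition.transpose 0 i \<circ> s"
  have tp: "Transposition.transpose 0 i permutes ?S" using assms by (intro permutes_swap_id) auto
  have "bij_betw ?phi {s. s permutes ?S \<and> s 0 = 0} {s. s permutes ?S \<and> s 0 = i}"
  proof (rule bij_betw_byWitness[where f'="?phi"])
    show "\<forall>a\<in>{s. s permutes ?S \<and> s 0 = 0}. ?phi (?phi a) = a"
      by (auto simp: fun_eq_iff)
    show "\<forall>a\<in>{s. s permutes ?S \<and> s 0 = i}. ?phi (?phi a) = a"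
      by (auto simp: fun_eq_iff)
    show "?phi ` {s. s permutes ?S \<and> s 0 = 0} \<subseteq> {s. s permutes ?S \<and> s 0 = i}"
      using tp by (auto intro: permutes_compose)
    show "?phi ` {s. s permutes ?S \<and> s 0 = i} \<subseteq> {s. s permutes ?S \<and> s 0 = 0}"
      using tp by (auto intro: permutes_compose)
  qed
  then have "card {s. s permutes ?S \<and> s 0 = 0} = card {s. s permutes ?S \<and> s 0 = i}"
    by (rule bij_betw_same_card)
  with c0 show ?thesis by simp
qed


theorem mainTheorem6:
  fixes g :: "real^'n^'n" and p :: nat and w :: "nat \<Rightarrow> real^'n"
  assumes "lorentzian g"
    and "1 \<le> p" and "p \<le> CARD('n)"
    and "inj_on w {..<p}" and "independent (w ` {..<p})"
  shows "\<forall>i<p. \<forall>b.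
     (\<Sum>a\<in>UNIV. \<Sum>c\<in>UNIV. w i $ a * matrix_inv g $ a $ c * superenergy g p (wedge p w) b c)
     = (-1) ^ (p - 1) * fullcontr (matrix_inv g) p (wedge p w) (wedge p w) / (2 * fact p) * w i $ b"
proof (intro allI impI)
  fix i b assume ip: "i < p"
  obtain m where pm: "p = Suc m" using assms(2) by (cases p) auto
  define gi where "gi = matrix_inv g"
  define Om where "Om = wedge p w"
  define PP where "PP = {s. s permutes {..<p}}"
  define G where "G = (\<lambda>k l. Bf gi (w k) (w l))"
  define DG where "DG = dett p G"
  have finPP: "finite PP" unfolding PP_def by (simp add: finite_permutations)
  have sq: "of_int (sign s) * (of_int (sign s) * y) = (y::real)" for s :: "nat \<Rightarrow> nat" and y
    by (metis mult.assoc of_int_mult sign_idempotent of_int_1 mult_1)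
  have Om_cons: "Om (x#ys) = (\<Sum>s\<in>PP. (of_int (sign s) * w (s 0) $ x) * (\<Prod>j<m. w (s (Suc j)) $ (ys!j)))" for x ys
    unfolding Om_def PP_def pm wedge_cons by (simp add: mult.assoc)
  have S_eq: "(\<Sum>ys\<in>tuples m. \<Sum>zs\<in>tuples m. Om (x#ys) * Om (c#zs) * (\<Prod>k<m. gi $ (ys!k) $ (zs!k)))
      = (\<Sum>s\<in>PP. \<Sum>t\<in>PP. (of_int (sign s) * w (s 0) $ x * of_int (sign t) * (\<Prod>k<m. G (s (Suc k)) (t (Suc k)))) * w (t 0) $ c)" for x c
    apply (simp only: Om_cons double_expand pair_contr)
    apply (simp add: G_def mult_ac)
    done
  have Om_alt: "Om xs = (\<Sum>s\<in>PP. of_int (sign s) * (\<Prod>j<p. w (s j) $ (xs!j)))" for xs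
    unfolding Om_def PP_def wedge_alt ..
  have Q_eq: "fullcontr gi p Om Om = (\<Sum>s\<in>PP. of_int (sign s) * (\<Sum>t\<in>PP. of_int (sign t) * (\<Prod>k<p. G (s k) (t k))))"
    unfolding fullcontr_def
    apply (simp only: Om_alt double_expand pair_contr)
    apply (simp add: G_def sum_distrib_left mult_ac)
    done
  have rowperm: "(\<Sum>t\<in>PP. of_int (sign t) * (\<Prod>k<p. G (s k) (t k))) = of_int (sign s) * DG" if "s \<in> PP" for s
  proof -
    have "(\<Sum>t\<in>PP. of_int (sign t) * (\<Prod>k<p. G (s k) (t k))) = dett p (\<lambda>j. G (s j))"
      unfolding dett_def PP_def ..
    also have "\<dots> = of_int (sign s) * DG" unfolding DG_def
      using that dett_perm_rows unfolding PP_def by blast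
    finally show ?thesis .
  qed
  have Q_val: "fullcontr gi p Om Om = fact p * DG"
  proof -
    have "fullcontr gi p Om Om = (\<Sum>s\<in>PP. DG)"
      unfolding Q_eq by (rule sum.cong) (simp_all add: rowperm sq)
    also have "\<dots> = fact p * DG" unfolding PP_def using card_permutations[of "{..<p}" p] by simp
    finally show ?thesis .
  qed
  have dett_Suc: "dett (Suc m) M = (\<Sum>t\<in>{t. t permutes {..<Suc m}}. of_int (sign t) * (M 0 (t 0) * (\<Prod>j<m. M (Suc j) (t (Suc j)))))" for M
    unfolding dett_def prod.lessThan_Suc_shift ..
  have dett_fix: "dett p (\<lambda>j. G (if j = 0 then i else s j)) = (if s 0 = i then of_int (sign s) * DG else 0)" if "s \<in> PP" for s
  proof (cases "s 0 = i")
    case True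
    then have "(\<lambda>j. G (if j = 0 then i else s j)) = (\<lambda>j. G (s j))" by (auto simp: fun_eq_iff)
    then show ?thesis using True dett_perm_rows that unfolding PP_def DG_def by simp
  next
    case False
    have sp: "s permutes {..<p}" using that PP_def by simp
    let ?j = "Hilbert_Choice.inv s i"
    have sj: "s ?j = i" using permutes_inverses(1)[OF sp] .
    have jp: "?j < p" using permutes_in_image[OF permutes_inv[OF sp], of i] ip by simp
    have j0: "?j \<noteq> 0" using False sj by metis
    have "dett p (\<lambda>j. G (if j = 0 then i else s j)) = 0"
      by (rule dett_rows_eq[of 0 ?j]) (use j0 jp ip sj in auto)
    with False show ?thesis by simp
  qed
  have X_eq: "(\<Sum>a\<in>UNIV. \<Sum>c\<in>UNIV. w i $ a * gi $ a $ c * (\<Sum>ys\<in>tuples m. \<Sum>zs\<in>tuples m. Om (b#ys) * Om (c#zs) * (\<Prod>k<m. gi $ (ys!k) $ (zs!k))))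
      = fact m * DG * w i $ b"
  proof -
    have "(\<Sum>a\<in>UNIV. \<Sum>c\<in>UNIV. w i $ a * gi $ a $ c * (\<Sum>ys\<in>tuples m. \<Sum>zs\<in>tuples m. Om (b#ys) * Om (c#zs) * (\<Prod>k<m. gi $ (ys!k) $ (zs!k))))
      = (\<Sum>s\<in>PP. \<Sum>t\<in>PP. (of_int (sign s) * w (s 0) $ b * of_int (sign t) * (\<Prod>k<m. G (s (Suc k)) (t (Suc k)))) * G i (t 0))"
      unfolding S_eq contr_expand G_def Bf_def ..
    also have "\<dots> = (\<Sum>s\<in>PP. of_int (sign s) * w (s 0) $ b * dett p (\<lambda>j. G (if j = 0 then i else s j)))"
    proof (rule sum.cong[OF refl])
      fix s assume "s \<in> PP"
      have PPm: "PP = {t. t permutes {..<Suc m}}" unfolding PP_def pm ..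
      show "(\<Sum>t\<in>PP. (of_int (sign s) * w (s 0) $ b * of_int (sign t) * (\<Prod>k<m. G (s (Suc k)) (t (Suc k)))) * G i (t 0))
         = of_int (sign s) * w (s 0) $ b * dett p (\<lambda>j. G (if j = 0 then i else s j))"
        unfolding pm dett_Suc PPm[symmetric] by (simp add: sum_distrib_left mult_ac)
    qed
    also have "\<dots> = (\<Sum>s\<in>PP. if s 0 = i then w i $ b * DG else 0)"
      by (rule sum.cong[OF refl]) (simp add: dett_fix sq)
    also have "\<dots> = card {s\<in>PP. s 0 = i} * (w i $ b * DG)"
      using sum.inter_filter[OF finPP, of "\<lambda>_. w i $ b * DG" "\<lambda>s. s 0 = i"] by simp
    also have "card {s\<in>PP. s 0 = i} = fact m"
      unfolding PP_def pm using card_perm_fix[of i m] ip pm by simp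
    finally show ?thesis by simp
  qed
  obtain E :: "real^'n^'n" and i0 where E: "invertible E"
    and J: "\<forall>i j. (transpose E ** g ** E) $ i $ j = (if i = j then (if i = i0 then 1 else -1) else 0)"
    and gs: "transpose g = g"
    using assms(1) unfolding lorentzian_def by blast
  define J where "J = transpose E ** g ** E"
  have J': "J $ x $ y = (if x = y then (if x = i0 then 1 else -1) else 0)" for x y
    using J J_def by simp
  have JJe: "(J ** J) $ x $ y = J $ x $ x * J $ x $ y" for x y
  proof -
    have "(J ** J) $ x $ y = (\<Sum>k\<in>UNIV. if k = x then J $ x $ x * J $ k $ y else 0)"
      unfolding matrix_matrix_mult_def vec_lambda_beta by (rule sum.cong) (auto simp: J')
    then show ?thesis by simp
  qed
  have JJ: "J ** J = Finite_Cartesian_Product.mat 1"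
    by (auto simp: Finite_Cartesian_Product.vec_eq_iff Finite_Cartesian_Product.mat_def JJe J')
  have "Determinants.det J * Determinants.det J = 1"
    using Determinants.det_mul[of J J] JJ by (simp add: Determinants.det_I)
  then have "Determinants.det J \<noteq> 0" by auto
  then have "Determinants.det g \<noteq> 0" unfolding J_def by (simp add: Determinants.det_mul)
  then have ginvt: "invertible g" by (simp add: Determinants.invertible_det_nz)
  have ginv: "gi ** g = Finite_Cartesian_Product.mat 1"
    unfolding gi_def matrix_inv_def using ginvt unfolding invertible_def by (rule someI2_ex) auto
  have gsym: "g $ x $ y = g $ y $ x" for x y
  proof -
    have "g $ x $ y = (transpose g) $ x $ y" using gs by simp
    then show ?thesis by (simp add: Finite_Cartesian_Product.transpose_def)
  qed
  have gc: "(\<Sum>c\<in>UNIV. gi $ a $ c * g $ b $ c) = (if a = b then 1 else 0)" for a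
  proof -
    have "(\<Sum>c\<in>UNIV. gi $ a $ c * g $ b $ c) = (gi ** g) $ a $ b"
      by (simp add: matrix_matrix_mult_def gsym)
    then show ?thesis using ginv by (simp add: Finite_Cartesian_Product.mat_def)
  qed
  have gpart: "(\<Sum>a\<in>UNIV. \<Sum>c\<in>UNIV. w i $ a * gi $ a $ c * g $ b $ c) = w i $ b"
  proof -
    have "(\<Sum>a\<in>UNIV. \<Sum>c\<in>UNIV. w i $ a * gi $ a $ c * g $ b $ c) = (\<Sum>a\<in>UNIV. w i $ a * (if a = b then 1 else 0))"
      by (rule sum.cong[OF refl]) (simp add: sum_distrib_left[symmetric] mult.assoc gc)
    also have "\<dots> = w i $ b" by (simp add: if_distrib cong: if_cong)
    finally show ?thesis .
  qed
  define Sb where "Sb = (\<lambda>c. \<Sum>ys\<in>tuples m. \<Sum>zs\<in>tuples m. Om (b#ys) * Om (c#zs) * (\<Prod>k<m. gi $ (ys!k) $ (zs!k)))"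
  define Cc where "Cc = ((-1::real) ^ m / fact m)"
  define K where "K = 1 / (2 * real p) * fullcontr gi p Om Om"
  have se: "superenergy g p Om b c = Cc * (Sb c - K * g $ b $ c)" for c
    unfolding superenergy_def Sb_def Cc_def K_def gi_def pm by simp
  have "(\<Sum>a\<in>UNIV. \<Sum>c\<in>UNIV. w i $ a * gi $ a $ c * superenergy g p Om b c)
      = Cc * ((\<Sum>a\<in>UNIV. \<Sum>c\<in>UNIV. w i $ a * gi $ a $ c * Sb c) - K * (\<Sum>a\<in>UNIV. \<Sum>c\<in>UNIV. w i $ a * gi $ a $ c * g $ b $ c))"
    unfolding se by (simp add: algebra_simps sum_subtractf sum_distrib_left)
  also have "\<dots> = Cc * (fact m * DG * w i $ b - K * w i $ b)"
    using X_eq unfolding Sb_def gpart by simp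
  also have "\<dots> = (-1) ^ (p - 1) * fullcontr gi p Om Om / (2 * fact p) * w i $ b"
    unfolding Cc_def K_def Q_val by (simp add: Q_val pm field_simps)
  finally show "(\<Sum>a\<in>UNIV. \<Sum>c\<in>UNIV. w i $ a * matrix_inv g $ a $ c * superenergy g p (wedge p w) b c)
     = (-1) ^ (p - 1) * fullcontr (matrix_inv g) p (wedge p w) (wedge p w) / (2 * fact p) * w i $ b"
    unfolding gi_def Om_def .
qed

end
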